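(* Let $p\in\{3,4,\dots\}$, $a\ge0$, $b>0$ satisfy either ($a>0$ and $b\in[p/2-1,p/2]$) or ($a=0$ and $b\in[p/2-1,p/2)$). For $y>0$ let $N\sim\mathrm{Poisson}(y/2)$. For each $k\in\{1,2,3\}$ there exist a bounded function $\psi_k$ on $(0,\infty)$ and a constant $d_k\in(0,\infty)$ such that $|\psi_k(y)|\le d_k/y$ for all $y>0$ and $$\frac{E[w_k(N)\mid y]}{E[w_{k-1}(N)\mid y]}=\frac p2+2(k-b-1)+\frac y2+\psi_k(y)\quad\text{for all }y>0.$$
   Context: $\mathbb{Z}^+=\{0,1,2,\dots\}$; $g_0(z)=(a+z)^{-b}$; for $n\in\mathbb{Z}^+$ and $k\in\{0,1,2,3\}$, $w_k(n)=\int_0^\infty\frac{g_0(z)(z/2)^{n+p/2+k-1}e^{-z/2}}{2\Gamma(n+p/2)}dz$. $E[\cdot\mid y]$ denotes expectation with $N\sim\mathrm{Poisson}(y/2)$. *)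

theory Defs
  imports "HOL-Analysis.Analysis" "HOL-Probability.Probability"
begin

definition g0 :: "real \<Rightarrow> real \<Rightarrow> real \<Rightarrow> real" where
  "g0 a b z = (a + z) powr (- b)"

definition wk :: "real \<Rightarrow> real \<Rightarrow> nat \<Rightarrow> nat \<Rightarrow> nat \<Rightarrow> real" where
  "wk a b p k n = (LBINT z:{0<..}.
      g0 a b z * (z / 2) powr (real n + real p / 2 + real k - 1) * exp (- z / 2)
      / (2 * Gamma (real n + real p / 2)))"

definition Ew :: "real \<Rightarrow> real \<Rightarrow> nat \<Rightarrow> nat \<Rightarrow> real \<Rightarrow> real" where
  "Ew a b p k y = measure_pmf.expectation (poisson_pmf (y / 2)) (\<lambda>n. wk a b p k n)"

end

theory Submission
  imports Defs "HOL-Real_Asymp.Real_Asymp"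
begin


lemma integ_base:
  fixes e :: real assumes "e > -1"
  shows "set_integrable lborel {0<..} (\<lambda>z. (z/2) powr e * exp (-z/2))"
proof -
  have G: "Gamma (e+1) = (\<integral>\<^sup>+t. ennreal (indicator {0..} t * t powr (e + 1 - 1) / exp t) \<partial>lborel)"
    using Gamma_conv_nn_integral_real[of "e+1"] assms by simp
  have i1: "integrable lborel (\<lambda>t::real. indicator {0..} t * t powr e / exp t)"
  proof (rule integrableI_nonneg)
    show "(\<lambda>t::real. indicator {0..} t * t powr e / exp t) \<in> borel_measurable lborel" by measurable
    show "AE x in lborel. 0 \<le> indicator {0..} x * x powr e / exp x" by (intro AE_I2) (simp add: indicator_def)
    show "(\<integral>\<^sup>+t. ennreal (indicator {0..} t * t powr e / exp t) \<partial>lborel) < \<infinity>"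
    proof -
      have "(\<integral>\<^sup>+t. ennreal (indicator {0..} t * t powr e / exp t) \<partial>lborel) = ennreal (Gamma (e+1))"
        using G by simp
      then show ?thesis by simp
    qed
  qed
  have i2: "integrable lborel (\<lambda>z::real. indicator {0..} (0 + (1/2) * z) * (0 + (1/2)*z) powr e / exp (0 + (1/2)*z))"
    using lborel_integrable_real_affine_iff[of "1/2" "\<lambda>t::real. indicator {0..} t * t powr e / exp t" 0] i1
    by simp
  have i3: "integrable lborel (\<lambda>z::real. indicator {0<..} z * ((z/2) powr e * exp (-z/2)))"
  proof (rule Bochner_Integration.integrable_bound[OF i2])
    show "(\<lambda>z::real. indicator {0<..} z * ((z/2) powr e * exp (-z/2))) \<in> borel_measurable lborel" by measurable
    show "AE x in lborel. norm (indicator {0<..} x * ((x/2) powr e * exp (-x/2))) \<le>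
        norm (indicator {0..} (0 + (1/2) * x) * (0 + (1/2)*x) powr e / exp (0 + (1/2)*x))"
    proof (intro AE_I2)
      fix x :: real
      show "norm (indicator {0<..} x * ((x/2) powr e * exp (-x/2))) \<le>
        norm (indicator {0..} (0 + (1/2) * x) * (0 + (1/2)*x) powr e / exp (0 + (1/2)*x))"
      proof (cases "x > 0")
        case True
        have "exp (-x/2) = 1 / exp (x/2)" by (simp add: exp_minus inverse_eq_divide)
        then show ?thesis using True by (simp add: indicator_def)
      next
        case False
        then show ?thesis by (simp add: indicator_def)
      qed
    qed
  qed
  then show ?thesis unfolding set_integrable_def by simp
qed

lemma integ_bound:
  fixes f g :: "real \<Rightarrow> real"
  assumes "set_integrable lborel {0<..} f" "g \<in> borel_measurable lborel"
    "\<And>z. z > 0 \<Longrightarrow> \<bar>g z\<bar> \<le> \<bar>f z\<bar>"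
  shows "set_integrable lborel {0<..} g"
proof (rule set_integrable_bound[OF assms(1)])
  show "set_borel_measurable lborel {0<..} g" unfolding set_borel_measurable_def
    using assms(2) by measurable
  show "AE x in lborel. x \<in> {0<..} \<longrightarrow> norm (g x) \<le> norm (f x)"
    using assms(3) by (intro AE_I2) simp
qed

definition fI :: "real \<Rightarrow> real \<Rightarrow> real \<Rightarrow> real \<Rightarrow> real" where
  "fI a b e z = g0 a b z * (z/2) powr e * exp (-z/2)"
definition fK :: "real \<Rightarrow> real \<Rightarrow> real \<Rightarrow> real \<Rightarrow> real" where
  "fK a b e z = (a + z) powr (-b-1) * (z/2) powr e * exp (-z/2)"

lemma fI_meas[measurable]: "fI a b e \<in> borel_measurable lborel"
  unfolding fI_def g0_def by measurable
lemma fK_meas[measurable]: "fK a b e \<in> borel_measurable lborel"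
  unfolding fK_def by measurable

lemma fI_pos: "a \<ge> 0 \<Longrightarrow> z > 0 \<Longrightarrow> fI a b e z > 0"
  unfolding fI_def g0_def by simp
lemma fK_nonneg: "a \<ge> 0 \<Longrightarrow> z > 0 \<Longrightarrow> fK a b e z \<ge> 0"
  unfolding fK_def by simp

lemma fI_integrable:
  assumes "a \<ge> 0" "b > 0" "e > -1" "a > 0 \<or> e - b > -1"
  shows "set_integrable lborel {0<..} (fI a b e)"
  using assms(4)
proof
  assume a: "a > 0"
  have "set_integrable lborel {0<..} (\<lambda>z. a powr (-b) * ((z/2) powr e * exp (-z/2)))"
    using integ_base[OF assms(3)] by simp
  then show ?thesis
  proof (rule integ_bound)
    fix z :: real assume z: "z > 0"
    have "(a+z) powr (-b) \<le> a powr (-b)" using a z assms(2) by (intro powr_mono2') auto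
    then show "\<bar>fI a b e z\<bar> \<le> \<bar>a powr (-b) * ((z/2) powr e * exp (-z/2))\<bar>"
      using z a unfolding fI_def g0_def by (simp add: mult_right_mono)
  qed simp
next
  assume eb: "e - b > -1"
  have "set_integrable lborel {0<..} (\<lambda>z. 2 powr (-b) * ((z/2) powr (e-b) * exp (-z/2)))"
    using integ_base[OF eb] by simp
  then show ?thesis
  proof (rule integ_bound)
    fix z :: real assume z: "z > 0"
    have "(a+z) powr (-b) \<le> z powr (-b)" using assms z by (intro powr_mono2') auto
    also have "z powr (-b) = 2 powr (-b) * (z/2) powr (-b)"
      using z by (simp add: powr_divide)
    finally have 1: "(a+z) powr (-b) \<le> 2 powr (-b) * (z/2) powr (-b)" .
    have "fI a b e z \<le> 2 powr (-b) * (z/2) powr (-b) * (z/2) powr e * exp (-z/2)"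
      unfolding fI_def g0_def using 1 z by (intro mult_right_mono) auto
    also have "\<dots> = 2 powr (-b) * ((z/2) powr (e-b) * exp (-z/2))"
      using z by (simp add: powr_add[symmetric] mult.assoc)
    finally show "\<bar>fI a b e z\<bar> \<le> \<bar>2 powr (-b) * ((z/2) powr (e-b) * exp (-z/2))\<bar>"
      using fI_pos[of a z b e] assms(1) z by simp
  qed simp
qed

lemma fK_integrable:
  assumes "a > 0" "b > 0" "e > -1"
  shows "set_integrable lborel {0<..} (fK a b e)"
proof -
  have "set_integrable lborel {0<..} (\<lambda>z. a powr (-b-1) * ((z/2) powr e * exp (-z/2)))"
    using integ_base[OF assms(3)] by simp
  then show ?thesis
  proof (rule integ_bound)
    fix z :: real assume z: "z > 0"
    have "(a+z) powr (-b-1) \<le> a powr (-b-1)" using assms z by (intro powr_mono2') auto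
    then show "\<bar>fK a b e z\<bar> \<le> \<bar>a powr (-b-1) * ((z/2) powr e * exp (-z/2))\<bar>"
      using z assms unfolding fK_def by (simp add: mult_right_mono)
  qed simp
qed

lemma set_integral_pos0:
  fixes f :: "real \<Rightarrow> real"
  assumes int: "set_integrable lborel {0<..} f" and pos: "\<And>z. z > 0 \<Longrightarrow> f z > 0"
  shows "(LBINT z:{0<..}. f z) > 0"
proof -
  have i: "integrable lborel (\<lambda>x. indicator {0<..} x *\<^sub>R f x)"
    using int unfolding set_integrable_def .
  have nn: "AE x in lborel. 0 \<le> indicator {0<..} x *\<^sub>R f x"
    using pos by (intro AE_I2) (simp add: indicator_def less_imp_le)
  have ge: "(LBINT z:{0<..}. f z) \<ge> 0"
    unfolding set_lebesgue_integral_def using nn by (rule integral_nonneg_AE)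
  have "(LBINT z:{0<..}. f z) \<noteq> 0"
  proof
    assume "(LBINT z:{0<..}. f z) = 0"
    then have "AE x in lborel. indicator {0<..} x *\<^sub>R f x = 0"
      unfolding set_lebesgue_integral_def using integral_nonneg_eq_0_iff_AE[OF i nn] by simp
    then have "AE x in lborel. x \<notin> {0<..<(1::real)}"
    proof (rule AE_mp, intro AE_I2 impI)
      fix x :: real assume "indicator {0<..} x *\<^sub>R f x = 0"
      then show "x \<notin> {0<..<1}" using pos[of x] by (auto simp: indicator_def)
    qed
    then have "emeasure lborel {0<..<(1::real)} = 0"
      by (subst (asm) AE_iff_measurable[of "{0<..<1}"]) auto
    then show False by simp
  qed
  then show ?thesis using ge by simp
qed

lemma wk_eq:
  "wk a b p k n = (LBINT z:{0<..}. fI a b (real n + real p / 2 + real k - 1) z) / (2 * Gamma (real n + real p / 2))"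
  unfolding wk_def fI_def by (simp only: set_integral_divide_zero)

lemma wk_rec:
  assumes "k \<ge> 1" "p \<ge> 1"
  shows "wk a b p k n = (real n + real p / 2) * wk a b p (k-1) (Suc n)"
proof -
  have e: "real (Suc n) + real p / 2 + real (k-1) - 1 = real n + real p / 2 + real k - 1"
    using assms by (simp add: of_nat_diff)
  have g: "Gamma (real (Suc n) + real p / 2) = (real n + real p / 2) * Gamma (real n + real p / 2)"
  proof -
    have "real n + real p / 2 > 0" using assms by simp
    then have "real n + real p / 2 \<notin> \<int>\<^sub>\<le>\<^sub>0" using nonpos_Ints_nonpos by force
    then show ?thesis using Gamma_plus1[of "real n + real p / 2"] by (simp add: add_ac)
  qed
  have pos: "real n + real p / 2 > 0" using assms by simp
  have alg: "\<And>X G m::real. m > 0 \<Longrightarrow> X / (2*G) = m * (X / (2*(m*G)))"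
    by (simp add: field_simps)
  show ?thesis unfolding wk_eq e g using alg[OF pos] by simp
qed

lemma ibp:
  fixes a b m :: real
  assumes a: "a \<ge> 0" and b: "b > 0" and m: "m > 0" and am: "a > 0 \<or> m - b > 0"
  shows "(LBINT z:{0<..}. fI a b m z) =
           (m - b) * (LBINT z:{0<..}. fI a b (m-1) z) + a * b * (LBINT z:{0<..}. fK a b (m-1) z)"
proof -
  define F where "F z = (a+z) powr (-b) * (z/2) powr m * exp (-z/2)" for z :: real
  define f where "f z = (m-b)/2 * fI a b (m-1) z - 1/2 * fI a b m z + a*b/2 * fK a b (m-1) z" for z :: real
  have i1: "set_integrable lborel {0<..} (fI a b (m-1))"
    using am by (intro fI_integrable) (use a b m in auto)
  have i2: "set_integrable lborel {0<..} (fI a b m)"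
    using am by (intro fI_integrable) (use a b m in auto)
  have i3: "a * b / 2 \<noteq> 0 \<Longrightarrow> set_integrable lborel {0<..} (fK a b (m-1))"
    using a b m by (intro fK_integrable) auto
  have fint: "set_integrable lborel {0<..} f"
    unfolding f_def using i1 i2 i3 by (intro set_integral_add set_integral_diff set_integrable_mult_right) auto
  have deriv: "(F has_real_derivative f z) (at z)" if z: "z > 0" for z
  proof -
    have az: "a + z > 0" using a z by simp
    have D: "(F has_real_derivative
        (-b * (a+z) powr (-b-1)) * (z/2) powr m * exp (-z/2)
        + (a+z) powr (-b) * (m * (z/2) powr (m-1) * (1/2)) * exp (-z/2)
        + (a+z) powr (-b) * (z/2) powr m * (exp (-z/2) * (-1/2))) (at z)"
      unfolding F_def using az z
      by (auto intro!: derivative_eq_intros simp: field_simps)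
    have e1: "(z/2) powr m = (z/2) * (z/2) powr (m-1)"
    proof -
      have "(z/2) powr m = (z/2) powr ((m-1) + 1)" by simp
      also have "\<dots> = (z/2) powr (m-1) * (z/2) powr 1" by (rule powr_add)
      finally show ?thesis using z by simp
    qed
    have e2: "(a+z) powr (-b) = (a+z) * (a+z) powr (-b-1)"
    proof -
      have "(a+z) powr (-b) = (a+z) powr ((-b-1) + 1)" by simp
      also have "\<dots> = (a+z) powr (-b-1) * (a+z) powr 1" by (rule powr_add)
      finally show ?thesis using az by simp
    qed
    have "(-b * (a+z) powr (-b-1)) * (z/2) powr m * exp (-z/2)
        + (a+z) powr (-b) * (m * (z/2) powr (m-1) * (1/2)) * exp (-z/2)
        + (a+z) powr (-b) * (z/2) powr m * (exp (-z/2) * (-1/2)) = f z"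
      unfolding f_def fI_def fK_def g0_def e1 e2 by (simp add: field_simps)
    with D show ?thesis by simp
  qed
  have cont: "isCont f z" if z: "z > 0" for z
  proof -
    have az: "a + z > 0" using a z by simp
    show ?thesis unfolding f_def fI_def fK_def g0_def using az z
      by (intro continuous_intros) auto
  qed
  have lim0: "(F \<longlongrightarrow> 0) (at_right 0)"
    using am
  proof
    assume a0: "a > 0"
    show ?thesis unfolding F_def using a0 b m by real_asymp
  next
    assume mb: "m - b > 0"
    show ?thesis
    proof (cases "a = 0")
      case True
      have "((\<lambda>z::real. z powr (-b) * (z/2) powr m * exp (-z/2)) \<longlongrightarrow> 0) (at_right 0)"
        using mb b by real_asymp
      then show ?thesis unfolding F_def True by simp
    next
      case False
      with a have a0: "a > 0" by simp
      show ?thesis unfolding F_def using a0 b m by real_asymp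
    qed
  qed
  have liminf: "(F \<longlongrightarrow> 0) at_top"
    unfolding F_def using a b m by real_asymp
  have "(LBINT x=ereal 0..\<infinity>. f x) = 0 - 0"
  proof (rule interval_integral_FTC_integrable[where F = F])
    show "ereal 0 < \<infinity>" by simp
    show "(F has_vector_derivative f x) (at x)" if "ereal 0 < ereal x" "ereal x < \<infinity>" for x
      using deriv[of x] that by (simp add: has_real_derivative_iff_has_vector_derivative)
    show "isCont f x" if "ereal 0 < ereal x" "ereal x < \<infinity>" for x
      using cont[of x] that by simp
    show "set_integrable lborel (einterval (ereal 0) \<infinity>) f"
      using fint by (simp add: einterval_def greaterThan_def)
    show "((F \<circ> real_of_ereal) \<longlongrightarrow> 0) (at_right (ereal 0))"
      using lim0 by (simp add: ereal_tendsto_simps1)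
    show "((F \<circ> real_of_ereal) \<longlongrightarrow> 0) (at_left \<infinity>)"
      using liminf by (simp add: ereal_tendsto_simps1)
  qed
  then have "(LBINT z:{0<..}. f z) = 0"
    using interval_lebesgue_integral_0_infty(2)[of lborel f] by (simp add: zero_ereal_def)
  moreover have "(LBINT z:{0<..}. f z) = (m-b)/2 * (LBINT z:{0<..}. fI a b (m-1) z)
        - 1/2 * (LBINT z:{0<..}. fI a b m z) + a*b/2 * (LBINT z:{0<..}. fK a b (m-1) z)"
  proof -
    have i3': "set_integrable lborel {0<..} (\<lambda>z. a*b/2 * fK a b (m-1) z)"
      using i3 by auto
    show ?thesis unfolding f_def
      apply (subst set_integral_add)
        apply (use i1 i2 in auto)[2]
      apply (use i3' in simp)
      apply (subst set_integral_diff)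
      using i1 i2 by auto
  qed
  ultimately have "0 = (m-b)/2 * (LBINT z:{0<..}. fI a b (m-1) z)
        - 1/2 * (LBINT z:{0<..}. fI a b m z) + a*b/2 * (LBINT z:{0<..}. fK a b (m-1) z)" by simp
  then have "(LBINT z:{0<..}. fI a b m z) = 2 * ((m-b)/2 * (LBINT z:{0<..}. fI a b (m-1) z))
        + 2 * (a*b/2 * (LBINT z:{0<..}. fK a b (m-1) z))" by linarith
  then show ?thesis by simp
qed

lemma set_integral_nonneg0:
  fixes f :: "real \<Rightarrow> real"
  assumes "\<And>z. z > 0 \<Longrightarrow> f z \<ge> 0"
  shows "(LBINT z:{0<..}. f z) \<ge> 0"
  unfolding set_lebesgue_integral_def using assms
  by (intro integral_nonneg_AE AE_I2) (simp add: indicator_def)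

lemma K_le_I:
  assumes a: "a > 0" and b: "b > 0" and e: "e > -1"
  shows "a * (LBINT z:{0<..}. fK a b e z) \<le> (LBINT z:{0<..}. fI a b e z)"
proof -
  have "(LBINT z:{0<..}. a * fK a b e z) \<le> (LBINT z:{0<..}. fI a b e z)"
  proof (rule set_integral_mono)
    show "set_integrable lborel {0<..} (\<lambda>z. a * fK a b e z)" using fK_integrable[OF a b e] by simp
    show "set_integrable lborel {0<..} (fI a b e)" using fI_integrable[of a b e] a b e by simp
    fix z :: real assume "z \<in> {0<..}"
    then have z: "z > 0" by simp
    have az: "a + z > 0" using a z by simp
    have e2: "(a+z) powr (-b) = (a+z) * (a+z) powr (-b-1)"
    proof -
      have "(a+z) powr (-b) = (a+z) powr ((-b-1) + 1)" by simp
      also have "\<dots> = (a+z) powr (-b-1) * (a+z) powr 1" by (rule powr_add)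
      finally show ?thesis using az by simp
    qed
    have "a * (a+z) powr (-b-1) \<le> (a+z) * (a+z) powr (-b-1)"
      using z by (intro mult_right_mono) auto
    then show "a * fK a b e z \<le> fI a b e z"
      unfolding fK_def fI_def g0_def e2 using z
      by (simp add: mult.assoc[symmetric] mult_right_mono)
  qed
  then show ?thesis by simp
qed

lemma K_le_I1:
  assumes a: "a > 0" and b: "b > 0" and e: "e > 0"
  shows "(LBINT z:{0<..}. fK a b e z) \<le> 1/2 * (LBINT z:{0<..}. fI a b (e-1) z)"
proof -
  have "(LBINT z:{0<..}. fK a b e z) \<le> (LBINT z:{0<..}. 1/2 * fI a b (e-1) z)"
  proof (rule set_integral_mono)
    show "set_integrable lborel {0<..} (fK a b e)" using fK_integrable[OF a b] e by simp
    show "set_integrable lborel {0<..} (\<lambda>z. 1/2 * fI a b (e-1) z)"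
      using fI_integrable[of a b "e-1"] a b e by simp
    fix z :: real assume "z \<in> {0<..}"
    then have z: "z > 0" by simp
    have az: "a + z > 0" using a z by simp
    have e2: "(a+z) powr (-b) = (a+z) * (a+z) powr (-b-1)"
    proof -
      have "(a+z) powr (-b) = (a+z) powr ((-b-1) + 1)" by simp
      also have "\<dots> = (a+z) powr (-b-1) * (a+z) powr 1" by (rule powr_add)
      finally show ?thesis using az by simp
    qed
    have e1: "(z/2) powr e = (z/2) * (z/2) powr (e-1)"
    proof -
      have "(z/2) powr e = (z/2) powr ((e-1) + 1)" by simp
      also have "\<dots> = (z/2) powr (e-1) * (z/2) powr 1" by (rule powr_add)
      finally show ?thesis using z by simp
    qed
    have "(a + z) powr (- b - 1) * (z/2) \<le> 1/2 * ((a+z) * (a+z) powr (-b-1))"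
      using a z by (simp add: field_simps mult_right_mono)
    then have "(a + z) powr (- b - 1) * (z/2) * ((z/2) powr (e-1) * exp (-z/2))
        \<le> 1/2 * ((a+z) * (a+z) powr (-b-1)) * ((z/2) powr (e-1) * exp (-z/2))"
      by (rule mult_right_mono) simp
    then show "fK a b e z \<le> 1/2 * fI a b (e-1) z"
      unfolding fK_def fI_def g0_def e2 e1 by (simp add: algebra_simps)
  qed
  then show ?thesis by simp
qed




definition Qcond :: "(nat \<Rightarrow> real) \<Rightarrow> real \<Rightarrow> real \<Rightarrow> bool" where
  "Qcond V c s \<longleftrightarrow> (\<forall>n. V n > 0) \<and>
     (\<exists>N K. K \<ge> 0 \<and> (\<forall>n\<ge>N. \<bar>(real n + c) * V (Suc n) - (real n + c + s) * V n\<bar> \<le> K * V n / (real n + c)))"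

lemma finite_extend:
  fixes f :: "nat \<Rightarrow> real"
  assumes "\<And>n. n \<ge> N \<Longrightarrow> f n \<le> M1"
  shows "\<exists>M>0. \<forall>n. f n \<le> M"
proof -
  define M where "M = max M1 1 + (\<Sum>i<N. \<bar>f i\<bar>)"
  have S: "(\<Sum>i<N. \<bar>f i\<bar>) \<ge> 0" by (simp add: sum_nonneg)
  have "f n \<le> M" for n
  proof (cases "n \<ge> N")
    case True
    then show ?thesis using assms[of n] S unfolding M_def by linarith
  next
    case False
    then have "\<bar>f n\<bar> \<le> (\<Sum>i<N. \<bar>f i\<bar>)"
      by (intro member_le_sum) auto
    then show ?thesis unfolding M_def by linarith
  qed
  moreover have "M > 0" unfolding M_def using S by linarith
  ultimately show ?thesis by blast
qed

lemma Q_shift: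
  assumes c: "c > 0" and Q: "Qcond V c s"
  shows "Qcond (\<lambda>n. (real n + c) * V (Suc n)) c (s + 1)"
proof -
  from Q have pos: "\<And>n. V n > 0" unfolding Qcond_def by blast
  from Q obtain N K where K: "K \<ge> 0"
    and B: "\<And>n. n \<ge> N \<Longrightarrow> \<bar>(real n + c) * V (Suc n) - (real n + c + s) * V n\<bar> \<le> K * V n / (real n + c)"
    unfolding Qcond_def by blast
  have "\<bar>(real n + c) * ((real (Suc n) + c) * V (Suc (Suc n))) - (real n + c + (s + 1)) * ((real n + c) * V (Suc n))\<bar>
        \<le> K * ((real n + c) * V (Suc n)) / (real n + c)" if n: "n \<ge> N" for n
  proof -
    have x: "real n + c > 0" using c by simp
    have "\<bar>(real n + c) * ((real (Suc n) + c) * V (Suc (Suc n))) - (real n + c + (s + 1)) * ((real n + c) * V (Suc n))\<bar>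
        = (real n + c) * \<bar>(real (Suc n) + c) * V (Suc (Suc n)) - (real (Suc n) + c + s) * V (Suc n)\<bar>"
    proof -
      have "(real n + c) * ((real (Suc n) + c) * V (Suc (Suc n))) - (real n + c + (s + 1)) * ((real n + c) * V (Suc n))
          = (real n + c) * ((real (Suc n) + c) * V (Suc (Suc n)) - (real (Suc n) + c + s) * V (Suc n))"
        by (simp add: algebra_simps)
      then show ?thesis using x by (simp add: abs_mult)
    qed
    also have "\<dots> \<le> (real n + c) * (K * V (Suc n) / (real (Suc n) + c))"
      using B[of "Suc n"] n x by (intro mult_left_mono) auto
    also have "\<dots> \<le> (real n + c) * (K * V (Suc n) / (real n + c))"
      using x K pos[of "Suc n"] by (intro mult_left_mono divide_left_mono) auto
    also have "\<dots> = K * ((real n + c) * V (Suc n)) / (real n + c)" using x by simp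
    finally show ?thesis .
  qed
  moreover have "\<And>n. (real n + c) * V (Suc n) > 0" using pos c by (simp add: add_pos_pos)
  ultimately show ?thesis unfolding Qcond_def using K by blast
qed

lemma Q_ratio:
  assumes c: "c > 0" and Q: "Qcond V c s"
  shows "\<exists>L>0. \<forall>n. V n \<le> L * V (Suc n)"
proof -
  from Q have pos: "\<And>n. V n > 0" unfolding Qcond_def by blast
  from Q obtain N K where K: "K \<ge> 0"
    and B: "\<And>n. n \<ge> N \<Longrightarrow> \<bar>(real n + c) * V (Suc n) - (real n + c + s) * V n\<bar> \<le> K * V n / (real n + c)"
    unfolding Qcond_def by blast
  define N1 where "N1 = max N (max 1 (nat \<lceil>2 * (K + \<bar>s\<bar>)\<rceil>))"
  have "V n / V (Suc n) \<le> 2" if n: "n \<ge> N1" for n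
  proof -
    define x where "x = real n + c"
    have x1: "x \<ge> 1" using n c unfolding N1_def x_def by auto
    have x2: "x \<ge> 2 * (K + \<bar>s\<bar>)" using n c unfolding N1_def x_def by linarith
    have Kx: "K * V n / x \<le> K * V n"
    proof -
      have "0 \<le> K * V n" using K pos[of n] by simp
      then have "1 * (K * V n) \<le> x * (K * V n)" using x1 by (intro mult_right_mono) auto
      then show ?thesis using x1 by (simp add: divide_le_eq mult.commute)
    qed
    have "x * V (Suc n) \<ge> (x + s) * V n - K * V n / x"
      using B[of n] n unfolding N1_def x_def by (auto simp: abs_le_iff)
    then have "x * V (Suc n) \<ge> (x + s - K) * V n" using Kx by (simp add: algebra_simps)
    moreover have "(x + s - K) * V n \<ge> (x/2) * V n"
      using x2 pos[of n] by (intro mult_right_mono) auto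
    ultimately have "x * V (Suc n) \<ge> x * (V n / 2)" by simp
    then have "V (Suc n) \<ge> V n / 2" using x1 by simp
    then show ?thesis using pos[of "Suc n"] by (simp add: divide_le_eq)
  qed
  then obtain L where L: "L > 0" "\<And>n. V n / V (Suc n) \<le> L"
    using finite_extend[of N1 "\<lambda>n. V n / V (Suc n)" 2] by blast
  have "V n \<le> L * V (Suc n)" for n using L(2)[of n] pos[of "Suc n"] by (simp add: divide_le_eq)
  then show ?thesis using L(1) by blast
qed

lemma Q_err:
  assumes c: "c > 0" and Q: "Qcond V c s"
  shows "\<exists>M>0. \<forall>n. \<bar>(real n + c) * V (Suc n) - real n * V (n - 1) - (c + 2 * s) * V n\<bar>
             \<le> M * V n / (real n + 1)"
proof -
  from Q have pos: "\<And>n. V n > 0" unfolding Qcond_def by blast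
  from Q obtain N K where K: "K \<ge> 0"
    and B: "\<And>n. n \<ge> N \<Longrightarrow> \<bar>(real n + c) * V (Suc n) - (real n + c + s) * V n\<bar> \<le> K * V n / (real n + c)"
    unfolding Qcond_def by blast
  obtain L where L: "L > 0" "\<And>n. V n \<le> L * V (Suc n)" using Q_ratio[OF c Q] by blast
  define A where "A = \<bar>s * (1 - c - s)\<bar> + 2 * K + 2 * K * L"
  define N2 where "N2 = N + 3 + nat \<lceil>2 * \<bar>s\<bar>\<rceil>"
  define e where "e n = (real n + c) * V (Suc n) - real n * V (n - 1) - (c + 2 * s) * V n" for n
  have main: "\<bar>e n\<bar> * (real n + 1) / V n \<le> 2 * A" if n: "n \<ge> N2" for n
  proof -
    define x where "x = real n + c"
    define q where "q = real n - 1 + c"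
    define r1 where "r1 = x * V (Suc n) - (x + s) * V n"
    define r2 where "r2 = q * V n - (q + s) * V (n - 1)"
    have n1: "n \<ge> 1" "n \<ge> 2" "n - 1 \<ge> N" using n unfolding N2_def by auto
    have ns: "real n \<ge> 3 + 2 * \<bar>s\<bar>" using n unfolding N2_def by linarith
    have x: "x > 0" unfolding x_def using c by simp
    have q: "q > 0" unfolding q_def using c n1 by simp
    have r1b: "\<bar>r1\<bar> \<le> K * V n / x" using B[of n] n1 unfolding r1_def x_def by simp
    have r2b: "\<bar>r2\<bar> \<le> K * V (n - 1) / q"
    proof -
      have "real (n - 1) = real n - 1" using n1 by (simp add: of_nat_diff)
      moreover have "Suc (n - 1) = n" using n1 by simp
      ultimately show ?thesis using B[of "n-1"] n1 unfolding r2_def q_def by (simp add: algebra_simps)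
    qed
    have ident: "(q + s) * e n = s * (1 - c - s) * V n + (q + s) * r1 + real n * r2"
      unfolding e_def r1_def r2_def q_def x_def by (simp add: algebra_simps)
    have qs1: "q + s \<ge> (real n + 1) / 2" unfolding q_def using ns c by (cases "s \<ge> 0") (simp_all add: field_simps)
    have qs2: "q + s \<le> 2 * x" unfolding q_def x_def using ns c by (cases "s \<ge> 0") (simp_all add: field_simps)
    have nq: "real n \<le> 2 * q" unfolding q_def using n1 c by (simp add: field_simps)
    have qspos: "q + s > 0" using qs1 by (smt (verit) divide_pos_pos of_nat_0_le_iff)
    have t1: "\<bar>(q + s) * r1\<bar> \<le> 2 * K * V n"
    proof -
      have "\<bar>(q + s) * r1\<bar> = (q + s) * \<bar>r1\<bar>" using qspos by (simp add: abs_mult)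
      also have "\<dots> \<le> (q + s) * (K * V n / x)" using qspos r1b by (intro mult_left_mono) auto
      also have "\<dots> = ((q + s) / x) * (K * V n)" by simp
      also have "\<dots> \<le> 2 * (K * V n)"
        using qs2 x K pos[of n] by (intro mult_right_mono) (auto simp: divide_le_eq)
      finally show ?thesis by simp
    qed
    have t2: "\<bar>real n * r2\<bar> \<le> 2 * K * L * V n"
    proof -
      have "\<bar>real n * r2\<bar> = real n * \<bar>r2\<bar>" by (simp add: abs_mult)
      also have "\<dots> \<le> real n * (K * V (n - 1) / q)" using r2b by (intro mult_left_mono) auto
      also have "\<dots> \<le> real n * (K * (L * V n) / q)"
      proof -
        have "V (n - 1) \<le> L * V n" using L(2)[of "n-1"] n1 by simp
        then have "K * V (n - 1) \<le> K * (L * V n)" using K by (intro mult_left_mono) auto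
        then have "K * V (n - 1) / q \<le> K * (L * V n) / q" using q by (intro divide_right_mono) auto
        then show ?thesis by (intro mult_left_mono) auto
      qed
      also have "\<dots> = (real n / q) * (K * L * V n)" by simp
      also have "\<dots> \<le> 2 * (K * L * V n)"
        using nq q K L pos[of n] by (intro mult_right_mono) (auto simp: divide_le_eq)
      finally show ?thesis by simp
    qed
    have "(q + s) * \<bar>e n\<bar> \<le> A * V n"
    proof -
      have "(q + s) * \<bar>e n\<bar> = \<bar>(q + s) * e n\<bar>" using qspos by (simp add: abs_mult)
      also have "\<dots> \<le> \<bar>s * (1 - c - s) * V n\<bar> + \<bar>(q + s) * r1\<bar> + \<bar>real n * r2\<bar>"
        unfolding ident by linarith
      also have "\<bar>s * (1 - c - s) * V n\<bar> = \<bar>s * (1 - c - s)\<bar> * V n"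
        using pos[of n] by (simp add: abs_mult)
      finally show ?thesis using t1 t2 unfolding A_def by (simp add: algebra_simps)
    qed
    moreover have "(real n + 1) / 2 * \<bar>e n\<bar> \<le> (q + s) * \<bar>e n\<bar>"
      using qs1 by (intro mult_right_mono) auto
    ultimately have "(real n + 1) * \<bar>e n\<bar> \<le> 2 * A * V n" by linarith
    then show ?thesis using pos[of n] by (simp add: divide_le_eq mult.commute)
  qed
  obtain M where M: "M > 0" "\<And>n. \<bar>e n\<bar> * (real n + 1) / V n \<le> M"
    using finite_extend[of N2 "\<lambda>n. \<bar>e n\<bar> * (real n + 1) / V n" "2 * A"] main by blast
  have "\<bar>e n\<bar> \<le> M * V n / (real n + 1)" for n
  proof -
    have "\<bar>e n\<bar> * (real n + 1) \<le> M * V n" using M(2)[of n] pos[of n] by (simp add: divide_le_eq)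
    then show ?thesis by (simp add: le_divide_eq add_pos_pos)
  qed
  then show ?thesis using M(1) unfolding e_def by blast
qed




locale setting =
  fixes a b :: real and p :: nat
  assumes p3: "p \<ge> 3" and a0: "a \<ge> 0" and b0: "b > 0" and bc: "b \<le> real p / 2"
    and abc: "a > 0 \<or> b < real p / 2"
begin

abbreviation "I e \<equiv> (LBINT z:{0<..}. fI a b e z)"
abbreviation "K e \<equiv> (LBINT z:{0<..}. fK a b e z)"
abbreviation "u n \<equiv> wk a b p 0 n"

lemma c_ge: "real p / 2 \<ge> 3/2" using p3 by simp

lemma u_eq: "u n = I (real n + real p / 2 - 1) / (2 * Gamma (real n + real p / 2))"
  using wk_eq[of a b p 0 n] by simp

lemma I_pos: "I (real n + real p / 2 - 1) > 0"
proof (rule set_integral_pos0)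
  show "set_integrable lborel {0<..} (fI a b (real n + real p / 2 - 1))"
    using a0 b0 c_ge abc bc by (intro fI_integrable) auto
  show "\<And>z. z > 0 \<Longrightarrow> fI a b (real n + real p / 2 - 1) z > 0" using a0 by (rule fI_pos)
qed

lemma u_pos: "u n > 0"
  unfolding u_eq using I_pos[of n] c_ge by (intro divide_pos_pos) (auto intro!: Gamma_real_pos)

lemma u_step:
  fixes n :: nat
  defines "m \<equiv> real n + real p / 2"
  shows "(m - b) * u n \<le> m * u (Suc n)" "m * u (Suc n) \<le> m * u n"
    and "n \<ge> 1 \<Longrightarrow> m * u (Suc n) \<le> (m - b) * u n + a * b * u (n - 1) / (2 * (m - 1))"
proof -
  have m: "m \<ge> 3/2" unfolding m_def using c_ge by simp
  define G where "G = Gamma m"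
  have G: "G > 0" unfolding G_def using m by (intro Gamma_real_pos) simp
  have Gs: "Gamma (m + 1) = m * G"
  proof -
    have "m \<notin> \<int>\<^sub>\<le>\<^sub>0" using m nonpos_Ints_nonpos by force
    then show ?thesis unfolding G_def using Gamma_plus1[of m] by (simp add: add_ac)
  qed
  have un: "u n = I (m - 1) / (2 * G)" unfolding u_eq m_def G_def by simp
  have us: "u (Suc n) = I m / (2 * (m * G))"
  proof -
    have "u (Suc n) = I m / (2 * Gamma (m + 1))" unfolding u_eq m_def by (simp add: add_ac)
    then show ?thesis using Gs by simp
  qed
  have mus: "m * u (Suc n) = I m / (2 * G)" unfolding us using m by (simp add: field_simps)
  have ibp': "I m = (m - b) * I (m - 1) + a * b * K (m - 1)"
    using a0 b0 m abc bc unfolding m_def by (intro ibp) auto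
  have Im1: "I (m - 1) > 0" using I_pos[of n] unfolding m_def by simp
  have Kn: "K (m - 1) \<ge> 0" using a0 by (intro set_integral_nonneg0 fK_nonneg)
  have aK: "a * b * K (m - 1) \<le> b * I (m - 1)"
  proof (cases "a > 0")
    case True
    have "a * K (m - 1) \<le> I (m - 1)" using True b0 m by (intro K_le_I) auto
    then show ?thesis using b0 by (simp add: mult.assoc mult.left_commute[of a] mult_left_mono)
  next
    case False
    then have "a = 0" using a0 by simp
    then show ?thesis using Im1 b0 by simp
  qed
  have abK: "a * b * K (m - 1) \<ge> 0" using a0 b0 Kn by simp
  show "(m - b) * u n \<le> m * u (Suc n)"
    unfolding mus un using ibp' abK G by (simp add: divide_right_mono)
  show "m * u (Suc n) \<le> m * u n"
  proof -
    have "I m \<le> m * I (m - 1)" using ibp' aK by (simp add: algebra_simps)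
    then have "I m / (2 * G) \<le> m * I (m - 1) / (2 * G)" using G by (intro divide_right_mono) auto
    then show ?thesis unfolding mus un by simp
  qed
  assume n1: "n \<ge> 1"
  have Gm1: "G = (m - 1) * Gamma (m - 1)"
  proof -
    have "m - 1 \<notin> \<int>\<^sub>\<le>\<^sub>0" using m nonpos_Ints_nonpos by force
    then show ?thesis unfolding G_def using Gamma_plus1[of "m-1"] by simp
  qed
  have um1: "u (n - 1) = I (m - 2) / (2 * Gamma (m - 1))"
    unfolding u_eq m_def using n1 by (simp add: of_nat_diff algebra_simps)
  have aK2: "a * K (m - 1) \<le> a / 2 * I (m - 2)"
  proof (cases "a > 0")
    case True
    have "K (m - 1) \<le> 1/2 * I (m - 1 - 1)" using True b0 m by (intro K_le_I1) auto
    then show ?thesis using True by (simp add: mult_left_mono)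
  next
    case False
    then have "a = 0" using a0 by simp
    then show ?thesis by simp
  qed
  have "m * u (Suc n) = (m - b) * u n + a * b * K (m - 1) / (2 * G)"
    unfolding mus un ibp' by (simp add: add_divide_distrib)
  also have "a * b * K (m - 1) / (2 * G) \<le> b * (a / 2 * I (m - 2)) / (2 * G)"
    using aK2 b0 G by (intro divide_right_mono) (auto simp: mult_left_mono mult.assoc mult.left_commute[of a])
  also have "b * (a / 2 * I (m - 2)) / (2 * G) = a * b * u (n - 1) / (2 * (m - 1))"
    unfolding um1 Gm1 using m by (simp add: field_simps)
  finally show "m * u (Suc n) \<le> (m - b) * u n + a * b * u (n - 1) / (2 * (m - 1))" by simp
qed

lemma Q_u: "Qcond u (real p / 2) (-b)"
  unfolding Qcond_def
proof (intro conjI allI exI[of _ "nat \<lceil>2 * b\<rceil> + 1"] exI[of _ "2 * a * b"] impI)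
  show "\<And>n. u n > 0" by (rule u_pos)
  show "0 \<le> 2 * a * b" using a0 b0 by simp
  fix n :: nat assume n: "nat \<lceil>2 * b\<rceil> + 1 \<le> n"
  define m where "m = real n + real p / 2"
  have n1: "n \<ge> 1" using n by simp
  have m1: "m - 1 \<ge> 2 * b" unfolding m_def using n c_ge by linarith
  have m2: "m \<ge> 2" unfolding m_def using n1 c_ge by linarith
  have s1: "(m - b) * u n \<le> m * u (Suc n)" using u_step(1)[of n] unfolding m_def .
  have s2: "m * u (Suc n) \<le> (m - b) * u n + a * b * u (n - 1) / (2 * (m - 1))"
    using u_step(3)[of n] n1 unfolding m_def by simp
  have s3: "(m - 1 - b) * u (n - 1) \<le> (m - 1) * u n"
  proof -
    have "real (n - 1) + real p / 2 = m - 1" using n1 unfolding m_def by (simp add: of_nat_diff)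
    moreover have "Suc (n - 1) = n" using n1 by simp
    ultimately show ?thesis using u_step(1)[of "n - 1"] by metis
  qed
  have un1: "u (n - 1) \<le> 2 * u n"
  proof -
    have "(m - 1) / 2 * u (n - 1) \<le> (m - 1 - b) * u (n - 1)"
      using m1 u_pos[of "n-1"] by (intro mult_right_mono) (auto simp: field_simps)
    then have "(m - 1) / 2 * u (n - 1) \<le> (m - 1) * u n" using s3 by linarith
    then have "(m - 1) * u (n - 1) \<le> (m - 1) * (2 * u n)" by (simp add: field_simps)
    then show ?thesis using m2 by simp
  qed
  have "a * b * u (n - 1) / (2 * (m - 1)) \<le> a * b * (2 * u n) / (2 * (m - 1))"
    using un1 a0 b0 m2 by (intro divide_right_mono mult_left_mono) auto
  also have "\<dots> = a * b * u n / (m - 1)" using m2 by (simp add: field_simps)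
  also have "\<dots> \<le> 2 * a * b * u n / m"
  proof -
    have ab: "a * b * u n \<ge> 0" using a0 b0 u_pos[of n] by simp
    have "a * b * u n / (m - 1) \<le> a * b * u n / (m / 2)"
      using m2 ab by (intro divide_left_mono) auto
    also have "a * b * u n / (m / 2) = 2 * a * b * u n / m" by simp
    finally show ?thesis .
  qed
  finally have "m * u (Suc n) - (m - b) * u n \<le> 2 * a * b * u n / m" using s2 by linarith
  moreover have "m * u (Suc n) - (m - b) * u n \<ge> 0" using s1 by linarith
  ultimately show "\<bar>(real n + real p / 2) * u (Suc n) - (real n + real p / 2 + - b) * u n\<bar>
        \<le> 2 * a * b * u n / (real n + real p / 2)"
    unfolding m_def by simp
qed

lemma wk_Suc: "wk a b p (Suc j) = (\<lambda>n. (real n + real p / 2) * wk a b p j (Suc n))"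
  using wk_rec[of "Suc j" p a b] p3 by (intro ext) simp

lemma Q_wk: "Qcond (wk a b p j) (real p / 2) (real j - b)"
proof (induction j)
  case 0
  then show ?case using Q_u by simp
next
  case (Suc j)
  have "Qcond (\<lambda>n. (real n + real p / 2) * wk a b p j (Suc n)) (real p / 2) (real j - b + 1)"
    using c_ge Suc by (intro Q_shift) auto
  then show ?case unfolding wk_Suc by (simp add: algebra_simps)
qed

end



lemma pow_le_fact_exp:
  fixes x :: real assumes "x \<ge> 0"
  shows "x ^ j \<le> fact j * exp x"
proof -
  have s: "(\<lambda>n. x ^ n /\<^sub>R fact n) sums exp x" by (rule exp_converges)
  have "sum (\<lambda>n. x ^ n /\<^sub>R fact n) {j} \<le> (\<Sum>n. x ^ n /\<^sub>R fact n)"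
    using assms by (intro sum_le_suminf sums_summable[OF s]) auto
  then have "x ^ j / fact j \<le> exp x" using sums_unique[OF s] by (simp add: divide_inverse mult.commute)
  then show ?thesis by (simp add: divide_le_eq mult.commute)
qed

definition ppois :: "real \<Rightarrow> nat \<Rightarrow> real" where
  "ppois l n = l ^ n / fact n * exp (-l)"

lemma ppois_pos: "l > 0 \<Longrightarrow> ppois l n > 0"
  unfolding ppois_def by simp

lemma ppois_Suc: "ppois l (Suc n) * (real n + 1) = l * ppois l n"
proof -
  have f: "(fact (Suc n)::real) = (real n + 1) * fact n" by simp
  have nz: "real n + 1 \<noteq> 0" by linarith
  have g: "\<And>x y E k::real. k \<noteq> 0 \<Longrightarrow> x / (k * y) * E * k = x / y * E"
    by (simp add: field_simps)
  show ?thesis unfolding ppois_def f using g[OF nz, of "l ^ Suc n" "fact n" "exp (-l)"] by simp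
qed

lemma div_Suc_le: "(x::real) \<ge> 0 \<Longrightarrow> x / (real n + 1) \<le> x"
  by (simp add: divide_le_eq mult_left_mono[of 1 "real n + 1" x, simplified] algebra_simps)

lemma summable_ppois_poly:
  assumes l: "l > 0" and D: "D \<ge> 0"
  shows "summable (\<lambda>n. ppois l n * (real n + D) ^ j)"
proof (rule summable_comparison_test')
  show "summable (\<lambda>n. fact j * exp D * exp (-l) * (inverse (fact n) * (exp 1 * l) ^ n))"
    by (intro summable_mult summable_exp)
  fix n :: nat
  have "(real n + D) ^ j \<le> fact j * exp (real n + D)" using D by (intro pow_le_fact_exp) simp
  also have "exp (real n + D) = exp D * exp 1 ^ n"
    by (simp add: exp_add exp_of_nat_mult[symmetric] mult.commute)
  finally have b: "(real n + D) ^ j \<le> fact j * (exp D * exp 1 ^ n)" .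
  have "norm (ppois l n * (real n + D) ^ j) = ppois l n * (real n + D) ^ j"
    using ppois_pos[OF l, of n] D by simp
  also have "\<dots> \<le> ppois l n * (fact j * (exp D * exp 1 ^ n))"
    using b ppois_pos[OF l, of n] by (intro mult_left_mono) auto
  also have "\<dots> = fact j * exp D * exp (-l) * (inverse (fact n) * (exp 1 * l) ^ n)"
    unfolding ppois_def by (simp add: power_mult_distrib field_simps)
  finally show "norm (ppois l n * (real n + D) ^ j) \<le> fact j * exp D * exp (-l) * (inverse (fact n) * (exp 1 * l) ^ n)" .
qed

lemma poisson_main:
  fixes V :: "nat \<Rightarrow> real" and l c C0 M L :: real
  assumes l: "l > 0" and pos: "\<And>n. V n > 0"
    and sV: "summable (\<lambda>n. ppois l n * V n)"
    and sW: "summable (\<lambda>n. ppois l n * ((real n + c) * V (Suc n)))"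
    and M: "M \<ge> 0" and L: "L \<ge> 0"
    and err: "\<And>n. \<bar>(real n + c) * V (Suc n) - real n * V (n - 1) - C0 * V n\<bar> \<le> M * V n / (real n + 1)"
    and rat: "\<And>n. V n \<le> L * V (Suc n)"
  shows "\<bar>(\<Sum>n. ppois l n * ((real n + c) * V (Suc n))) / (\<Sum>n. ppois l n * V n) - (l + C0)\<bar> \<le> M"
    and "\<bar>(\<Sum>n. ppois l n * ((real n + c) * V (Suc n))) / (\<Sum>n. ppois l n * V n) - (l + C0)\<bar> \<le> M * L / l"
proof -
  define F where "F = (\<Sum>n. ppois l n * V n)"
  define G where "G = (\<Sum>n. ppois l n * ((real n + c) * V (Suc n)))"
  define e where "e n = (real n + c) * V (Suc n) - real n * V (n - 1) - C0 * V n" for n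
  have pp: "\<And>n. ppois l n > 0" using ppois_pos[OF l] .
  have F: "F > 0" unfolding F_def using sV pos pp by (intro suminf_pos) auto
  have sF: "(\<lambda>n. ppois l n * V n) sums F" unfolding F_def using sV by (rule summable_sums)
  have sG: "(\<lambda>n. ppois l n * ((real n + c) * V (Suc n))) sums G" unfolding G_def using sW by (rule summable_sums)
  have s1: "(\<lambda>n. ppois l n * (real n * V (n - 1))) sums (l * F)"
  proof -
    have "(\<lambda>n. ppois l (Suc n) * (real (Suc n) * V (Suc n - 1))) = (\<lambda>n. l * (ppois l n * V n))"
      using ppois_Suc[of l] by (intro ext) (simp add: mult.assoc[symmetric] add.commute)
    moreover have "(\<lambda>n. l * (ppois l n * V n)) sums (l * F)" using sF by (rule sums_mult)
    ultimately have "(\<lambda>n. ppois l (Suc n) * (real (Suc n) * V (Suc n - 1))) sums (l * F)" by simp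
    then show ?thesis by (subst (asm) sums_Suc_iff) simp
  qed
  have se: "(\<lambda>n. ppois l n * e n) sums (G - l * F - C0 * F)"
  proof -
    have "(\<lambda>n. ppois l n * ((real n + c) * V (Suc n)) - ppois l n * (real n * V (n - 1)) - C0 * (ppois l n * V n))
        sums (G - l * F - C0 * F)"
      by (intro sums_diff sG s1 sums_mult sF)
    then show ?thesis unfolding e_def by (simp add: algebra_simps)
  qed
  have sH: "summable (\<lambda>n. ppois l n * (M * V n / (real n + 1)))"
  proof (rule summable_comparison_test'[OF summable_mult[OF sV, of M]])
    fix n :: nat
    have "M * V n / (real n + 1) \<le> M * V n"
      using M pos[of n] by (intro div_Suc_le) simp
    then have "ppois l n * (M * V n / (real n + 1)) \<le> ppois l n * (M * V n)"
      using pp[of n] by (intro mult_left_mono) auto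
    moreover have "ppois l n * (M * V n / (real n + 1)) \<ge> 0" using pp[of n] M pos[of n] by simp
    ultimately show "norm (ppois l n * (M * V n / (real n + 1))) \<le> M * (ppois l n * V n)"
      by (simp add: mult.left_commute)
  qed
  have bnd1: "\<bar>G - l * F - C0 * F\<bar> \<le> (\<Sum>n. ppois l n * (M * V n / (real n + 1)))"
  proof -
    have ab: "\<bar>ppois l n * e n\<bar> \<le> ppois l n * (M * V n / (real n + 1))" for n
    proof -
      have "\<bar>ppois l n * e n\<bar> = ppois l n * \<bar>e n\<bar>" using pp[of n] by (simp add: abs_mult)
      also have "\<dots> \<le> ppois l n * (M * V n / (real n + 1))"
        using err[of n] pp[of n] unfolding e_def by (intro mult_left_mono) auto
      finally show ?thesis .
    qed
    have sa: "summable (\<lambda>n. \<bar>ppois l n * e n\<bar>)"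
      by (rule summable_comparison_test'[OF sH]) (use ab in simp)
    have "\<bar>G - l * F - C0 * F\<bar> = \<bar>\<Sum>n. ppois l n * e n\<bar>" using sums_unique[OF se] by simp
    also have "\<dots> \<le> (\<Sum>n. \<bar>ppois l n * e n\<bar>)" using sa by (rule summable_rabs)
    also have "\<dots> \<le> (\<Sum>n. ppois l n * (M * V n / (real n + 1)))"
      using ab sa sH by (intro suminf_le) auto
    finally show ?thesis .
  qed
  have bnd2: "(\<Sum>n. ppois l n * (M * V n / (real n + 1))) \<le> M * F"
  proof -
    have "(\<Sum>n. ppois l n * (M * V n / (real n + 1))) \<le> (\<Sum>n. M * (ppois l n * V n))"
    proof (rule suminf_le)
      fix n
      have "M * V n / (real n + 1) \<le> M * V n"
        using M pos[of n] by (intro div_Suc_le) simp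
      then have "ppois l n * (M * V n / (real n + 1)) \<le> ppois l n * (M * V n)"
        using pp[of n] by (intro mult_left_mono) auto
      then show "ppois l n * (M * V n / (real n + 1)) \<le> M * (ppois l n * V n)"
        by (simp add: mult.left_commute)
    qed (use sH sV in auto)
    also have "\<dots> = M * F" unfolding F_def using sV by (rule suminf_mult)
    finally show ?thesis .
  qed
  have bnd3: "(\<Sum>n. ppois l n * (M * V n / (real n + 1))) \<le> M * L / l * F"
  proof -
    have sS: "summable (\<lambda>n. ppois l (Suc n) * V (Suc n))" using sV by (subst summable_Suc_iff)
    have "(\<Sum>n. ppois l n * (M * V n / (real n + 1))) \<le> (\<Sum>n. M * L / l * (ppois l (Suc n) * V (Suc n)))"
    proof (rule suminf_le)
      fix n
      have "ppois l n / (real n + 1) = ppois l (Suc n) / l"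
        using ppois_Suc[of l n] l by (simp add: field_simps)
      have "ppois l n * (M * V n / (real n + 1)) = M * (ppois l n / (real n + 1)) * V n" by simp
      also have "\<dots> = M * (ppois l (Suc n) / l) * V n"
        using ppois_Suc[of l n] l by (simp add: field_simps)
      also have "\<dots> \<le> M * (ppois l (Suc n) / l) * (L * V (Suc n))"
        using rat[of n] M pp[of "Suc n"] l by (intro mult_left_mono) auto
      also have "\<dots> = M * L / l * (ppois l (Suc n) * V (Suc n))" by simp
      finally show "ppois l n * (M * V n / (real n + 1)) \<le> M * L / l * (ppois l (Suc n) * V (Suc n))" .
    qed (use sH sS in auto)
    also have "\<dots> = M * L / l * (\<Sum>n. ppois l (Suc n) * V (Suc n))" using sS by (rule suminf_mult)
    also have "(\<Sum>n. ppois l (Suc n) * V (Suc n)) \<le> F"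
      unfolding F_def using suminf_split_head[OF sV] pp[of 0] pos[of 0] by simp
    then have "M * L / l * (\<Sum>n. ppois l (Suc n) * V (Suc n)) \<le> M * L / l * F"
      using M L l by (intro mult_left_mono) auto
    finally show ?thesis .
  qed
  have key: "\<bar>G / F - (l + C0)\<bar> = \<bar>G - l * F - C0 * F\<bar> / F"
  proof -
    have "G / F - (l + C0) = (G - l * F - C0 * F) / F" using F by (simp add: field_simps)
    then show ?thesis using F by simp
  qed
  show "\<bar>G / F - (l + C0)\<bar> \<le> M" unfolding key using bnd1 bnd2 F by (simp add: divide_le_eq mult.commute)
  show "\<bar>G / F - (l + C0)\<bar> \<le> M * L / l" unfolding key using bnd1 bnd3 F by (simp add: divide_le_eq mult.commute)
qed




lemma E_sum:
  fixes P :: "nat pmf" and f :: "nat \<Rightarrow> real"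
  assumes nn: "\<And>n. f n \<ge> 0" and s: "summable (\<lambda>n. pmf P n * f n)"
  shows "measure_pmf.expectation P f = (\<Sum>n. pmf P n * f n)"
proof -
  have "measure_pmf.expectation P f = integral\<^sup>L (count_space UNIV) (\<lambda>n. pmf P n * f n)"
    unfolding measure_pmf_eq_density by (subst integral_density) (auto simp: pmf_nonneg)
  also have "\<dots> = (\<Sum>n. pmf P n * f n)"
  proof (rule integral_count_space_nat)
    have "summable (\<lambda>n. norm (pmf P n * f n))" using s nn by (simp add: pmf_nonneg)
    then show "integrable (count_space UNIV) (\<lambda>n. pmf P n * f n)"
      by (simp add: integrable_count_space_nat_iff)
  qed
  finally show ?thesis .
qed

context setting
begin

lemma u_mono: "u n \<le> u 0"
proof (induction n)
  case (Suc n)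
  have "(real n + real p / 2) * u (Suc n) \<le> (real n + real p / 2) * u n" by (rule u_step(2))
  moreover have "real n + real p / 2 > 0" using c_ge by linarith
  ultimately have "u (Suc n) \<le> u n" by simp
  then show ?case using Suc by simp
qed simp

lemma wk_pos: "wk a b p j n > 0"
  using Q_wk[of j] unfolding Qcond_def by blast

lemma wk_bound: "wk a b p j n \<le> u 0 * (real n + (real p / 2 + real j)) ^ j"
proof (induction j arbitrary: n)
  case 0
  then show ?case using u_mono[of n] by simp
next
  case (Suc j)
  have c: "real n + real p / 2 > 0" using c_ge by linarith
  have "wk a b p (Suc j) n = (real n + real p / 2) * wk a b p j (Suc n)" using wk_Suc by metis
  also have "\<dots> \<le> (real n + real p / 2) * (u 0 * (real (Suc n) + (real p / 2 + real j)) ^ j)"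
    using Suc[of "Suc n"] c by (intro mult_left_mono) auto
  also have "\<dots> \<le> (real n + (real p / 2 + real (Suc j))) * (u 0 * (real n + (real p / 2 + real (Suc j))) ^ j)"
  proof -
    have eq: "real (Suc n) + (real p / 2 + real j) = real n + (real p / 2 + real (Suc j))" by simp
    have nn: "u 0 * (real n + (real p / 2 + real (Suc j))) ^ j \<ge> 0"
      using u_pos[of 0] c_ge by simp
    show ?thesis unfolding eq using nn by (intro mult_right_mono) auto
  qed
  also have "\<dots> = u 0 * (real n + (real p / 2 + real (Suc j))) ^ Suc j" by (simp add: algebra_simps)
  finally show ?case .
qed

lemma wk_summable:
  assumes l: "l > 0"
  shows "summable (\<lambda>n. ppois l n * wk a b p j n)"
proof (rule summable_comparison_test')
  show "summable (\<lambda>n. u 0 * (ppois l n * (real n + (real p / 2 + real j)) ^ j))"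
    using c_ge l by (intro summable_mult summable_ppois_poly) auto
  fix n :: nat
  have "norm (ppois l n * wk a b p j n) = ppois l n * wk a b p j n"
    using ppois_pos[OF l, of n] wk_pos[of j n] by simp
  also have "\<dots> \<le> ppois l n * (u 0 * (real n + (real p / 2 + real j)) ^ j)"
    using ppois_pos[OF l, of n] wk_bound[of j n] by (intro mult_left_mono) auto
  finally show "norm (ppois l n * wk a b p j n) \<le> u 0 * (ppois l n * (real n + (real p / 2 + real j)) ^ j)"
    by (simp add: mult_ac)
qed

lemma Ew_sum:
  assumes y: "y > 0"
  shows "Ew a b p j y = (\<Sum>n. ppois (y/2) n * wk a b p j n)"
proof -
  have pm: "pmf (poisson_pmf (y/2)) n = ppois (y/2) n" for n
    using y by (simp add: ppois_def)
  show ?thesis unfolding Ew_def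
    using E_sum[of "wk a b p j" "poisson_pmf (y/2)"] wk_pos[of j] wk_summable[of "y/2" j] y
    by (simp add: pm less_imp_le)
qed

lemma main_k:
  assumes k: "k \<ge> 1"
  shows "\<exists>(\<psi> :: real \<Rightarrow> real) (d :: real).
           bounded (\<psi> ` {0<..}) \<and> 0 < d \<and>
           (\<forall>y > 0. \<bar>\<psi> y\<bar> \<le> d / y \<and>
              Ew a b p k y / Ew a b p (k - 1) y
                = real p / 2 + 2 * (real k - b - 1) + y / 2 + \<psi> y)"
proof -
  define V where "V = wk a b p (k - 1)"
  have c: "real p / 2 > 0" using c_ge by linarith
  have Q: "Qcond V (real p / 2) (real (k - 1) - b)" unfolding V_def by (rule Q_wk)
  obtain M where M: "M > 0" "\<And>n. \<bar>(real n + real p / 2) * V (Suc n) - real n * V (n - 1)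
      - (real p / 2 + 2 * (real (k - 1) - b)) * V n\<bar> \<le> M * V n / (real n + 1)"
    using Q_err[OF c Q] by blast
  obtain L where L: "L > 0" "\<And>n. V n \<le> L * V (Suc n)" using Q_ratio[OF c Q] by blast
  have C0: "real p / 2 + 2 * (real (k - 1) - b) = real p / 2 + 2 * (real k - b - 1)"
    using k by (simp add: of_nat_diff)
  have Wk: "wk a b p k = (\<lambda>n. (real n + real p / 2) * V (Suc n))"
    unfolding V_def using wk_Suc[of "k - 1"] k by simp
  define \<psi> where "\<psi> y = Ew a b p k y / Ew a b p (k - 1) y - (real p / 2 + 2 * (real k - b - 1) + y / 2)" for y
  have B: "\<bar>\<psi> y\<bar> \<le> M \<and> \<bar>\<psi> y\<bar> \<le> M * L / (y / 2)" if y: "y > 0" for y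
  proof -
    have l: "y / 2 > 0" using y by simp
    have e1: "Ew a b p k y = (\<Sum>n. ppois (y/2) n * ((real n + real p / 2) * V (Suc n)))"
      using Ew_sum[OF y, of k] unfolding Wk by simp
    have e0: "Ew a b p (k - 1) y = (\<Sum>n. ppois (y/2) n * V n)"
      using Ew_sum[OF y, of "k - 1"] unfolding V_def by simp
    have sW: "summable (\<lambda>n. ppois (y/2) n * ((real n + real p / 2) * V (Suc n)))"
      using wk_summable[OF l, of k] unfolding Wk by simp
    have sV: "summable (\<lambda>n. ppois (y/2) n * V n)"
      using wk_summable[OF l, of "k-1"] unfolding V_def by simp
    have pos: "\<And>n. V n > 0" unfolding V_def by (rule wk_pos)
    have ps: "\<psi> y = (\<Sum>n. ppois (y/2) n * ((real n + real p / 2) * V (Suc n))) / (\<Sum>n. ppois (y/2) n * V n)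
        - (y/2 + (real p / 2 + 2 * (real (k - 1) - b)))"
      unfolding \<psi>_def e1 e0 C0 by simp
    show ?thesis unfolding ps
      using poisson_main[OF l pos sV sW _ _ M(2) L(2)] M(1) L(1) by auto
  qed
  have "bounded (\<psi> ` {0<..})"
    unfolding bounded_iff using B by (intro exI[of _ M]) auto
  moreover have "0 < 2 * M * L" using M L by simp
  moreover have "\<forall>y > 0. \<bar>\<psi> y\<bar> \<le> 2 * M * L / y \<and>
              Ew a b p k y / Ew a b p (k - 1) y
                = real p / 2 + 2 * (real k - b - 1) + y / 2 + \<psi> y"
  proof (intro allI impI conjI)
    fix y :: real assume y: "y > 0"
    have "\<bar>\<psi> y\<bar> \<le> M * L / (y / 2)" by (rule conjunct2[OF B[OF y]])
    also have "M * L / (y / 2) = 2 * M * L / y" by simp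
    finally show "\<bar>\<psi> y\<bar> \<le> 2 * M * L / y" .
    show "Ew a b p k y / Ew a b p (k - 1) y = real p / 2 + 2 * (real k - b - 1) + y / 2 + \<psi> y"
      unfolding \<psi>_def by simp
  qed
  ultimately show ?thesis by blast
qed

end

theorem propositionA7:
  fixes p :: nat and a b :: real
  assumes "p \<ge> 3" and "a \<ge> 0" and "b > 0"
    and "(a > 0 \<and> real p / 2 - 1 \<le> b \<and> b \<le> real p / 2) \<or>
         (a = 0 \<and> real p / 2 - 1 \<le> b \<and> b < real p / 2)"
  shows "\<forall>k \<in> {1, 2, 3}. \<exists>(\<psi> :: real \<Rightarrow> real) (d :: real).
           bounded (\<psi> ` {0<..}) \<and> 0 < d \<and>
           (\<forall>y > 0. \<bar>\<psi> y\<bar> \<le> d / y \<and>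
              Ew a b p k y / Ew a b p (k - 1) y
                = real p / 2 + 2 * (real k - b - 1) + y / 2 + \<psi> y)"
proof -
  interpret setting a b p
    using assms by unfold_locales auto
  show ?thesis
  proof (intro ballI)
    fix k :: nat assume "k \<in> {1, 2, 3}"
    then have "k \<ge> 1" by auto
    then show "\<exists>(\<psi> :: real \<Rightarrow> real) (d :: real).
           bounded (\<psi> ` {0<..}) \<and> 0 < d \<and>
           (\<forall>y > 0. \<bar>\<psi> y\<bar> \<le> d / y \<and>
              Ew a b p k y / Ew a b p (k - 1) y
                = real p / 2 + 2 * (real k - b - 1) + y / 2 + \<psi> y)" by (rule main_k)
  qed
qed


end
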